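(* Let $f\colon\mathbb{C}\to\mathbb{C}$, $f(z)=e^z$, and for $z_0\in\mathbb{C}$ define its orbit by $z_n = e^{z_{n-1}}$ for $n\geq 1$. Then each of the following sets is dense in $\mathbb{C}$: 1. the set of $z_0$ whose orbit satisfies $z_n\to\infty$ (i.e. $|z_n|\to\infty$) as $n\to\infty$; 2. the set of $z_0$ whose orbit $\{z_n : n\ge 0\}$ is a dense subset of $\mathbb{C}$; 3. the set of periodic points, i.e. those $z_0$ for which there is $k>0$ with $z_{n+k}=z_n$ for all $n\geq 0$. *)

theory Defs
  imports "HOL-Analysis.Analysis"
begin

end

theory Submission
  imports Defs "HOL-Complex_Analysis.Conformal_Mappings"
begin

lemma funpow_hol: "(exp ^^ n) holomorphic_on (UNIV::complex set)"
  by (induction n) (auto intro!: holomorphic_intros holomorphic_on_compose[unfolded o_def])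

lemma funpow_deriv:
  "((exp ^^ n) has_field_derivative (\<Prod>k\<in>{1..n}. (exp ^^ k) z)) (at (z::complex))"
proof (induction n)
  case 0 then show ?case by (simp add: DERIV_ident[unfolded id_def])
next
  case (Suc n)
  have "((\<lambda>z. exp ((exp ^^ n) z)) has_field_derivative exp ((exp ^^ n) z) * (\<Prod>k\<in>{1..n}. (exp ^^ k) z)) (at z)"
    by (rule DERIV_chain2[OF DERIV_exp Suc])
  moreover have "(\<Prod>k\<in>{1..Suc n}. (exp ^^ k) z) = exp ((exp ^^ n) z) * (\<Prod>k\<in>{1..n}. (exp ^^ k) z)"
    by (simp add: prod.cl_ivl_Suc)
  ultimately show ?case by (simp add: mult.commute)
qed

lemma cos_lb: "cos (y::real) \<ge> 1 - y^2/2"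
proof -
  have "cos y = cos (2*(y/2))" by simp
  also have "\<dots> = 1 - 2 * sin (y/2)^2" by (rule cos_double_sin)
  also have "\<dots> \<ge> 1 - 2 * (y/2)^2"
  proof -
    have "\<bar>sin (y/2)\<bar>^2 \<le> \<bar>y/2\<bar>^2"
      by (rule power_mono[OF abs_sin_x_le_abs_x abs_ge_zero])
    thus ?thesis by (simp add: power_divide)
  qed
  finally show ?thesis by (simp add: power_divide)
qed

lemma cos_sixth: "cos (1/6::real) < 1" "cos (1/6::real) \<ge> 1/2"
  using cos_double_less_one[of "1/12"] apply simp
  using cos_lb[of "1/6"] by (simp add: power2_eq_square)

lemma sin_contract:
  assumes "\<bar>y::real\<bar> \<ge> 1/3" shows "\<bar>sin y\<bar> \<le> cos (1/6) * \<bar>y\<bar>"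
proof (cases "\<bar>y\<bar> \<ge> 2")
  case True
  have "(1/2) * 2 \<le> cos (1/6) * \<bar>y\<bar>" using cos_sixth(2) True by (intro mult_mono) auto
  then show ?thesis using abs_sin_le_one[of y] by linarith
next
  case False
  have "sin y = sin (2*(y/2))" by simp
  also have "\<dots> = 2 * sin (y/2) * cos (y/2)" by (rule sin_double)
  finally have "\<bar>sin y\<bar> = 2 * \<bar>sin (y/2)\<bar> * \<bar>cos (y/2)\<bar>" by (simp add: abs_mult)
  moreover have cy: "\<bar>cos (y/2)\<bar> = cos (\<bar>y\<bar>/2)"
  proof -
    have "cos (y/2) = cos (\<bar>y\<bar>/2)" using cos_abs_real[of "y/2"] by simp
    moreover have "cos (\<bar>y\<bar>/2) \<ge> 0" using False pi_gt3 by (intro cos_ge_zero) auto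
    ultimately show ?thesis by simp
  qed
  moreover have c1: "cos (\<bar>y\<bar>/2) \<le> cos (1/6)"
    using False assms pi_gt3 by (subst cos_mono_le_eq) auto
  moreover have s1: "\<bar>sin (y/2)\<bar> \<le> \<bar>y\<bar>/2" using abs_sin_x_le_abs_x[of "y/2"] by simp
  moreover have c0: "cos (\<bar>y\<bar>/2) \<ge> 0" using False pi_gt3 by (intro cos_ge_zero) auto
  ultimately have "\<bar>sin y\<bar> = 2 * \<bar>sin (y/2)\<bar> * cos (\<bar>y\<bar>/2)" by simp
  also have "\<dots> \<le> 2 * (\<bar>y\<bar>/2) * cos (\<bar>y\<bar>/2)"
    using s1 c0 by (intro mult_right_mono) auto
  also have "\<dots> \<le> 2 * (\<bar>y\<bar>/2) * cos (1/6)"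
    using c1 by (intro mult_left_mono) auto
  finally have "\<bar>sin y\<bar> \<le> 2 * (\<bar>y\<bar>/2) * cos (1/6)" .
  then show ?thesis by (simp add: mult.commute)
qed

lemma bloch_bound:
  assumes r: "r > 0" and H: "\<And>n w. w \<in> ball c r \<Longrightarrow> Im ((exp ^^ n) w) \<noteq> 0"
  shows "norm (\<Prod>k\<in>{1..n}. (exp ^^ k) c) \<le> 6 * pi / r"
proof (rule ccontr)
  define D where "D = (\<Prod>k\<in>{1..n}. (exp ^^ k) c)"
  assume "\<not> ?thesis"
  hence big: "norm D > 6 * pi / r" by (simp add: D_def)
  define r' where "r' = r * norm D / 12"
  have "r' > pi/2" using big r unfolding r'_def by (simp add: field_simps)
  have der: "deriv (exp ^^ n) c = D"
    unfolding D_def by (rule DERIV_imp_deriv[OF funpow_deriv])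
  have hol: "(exp ^^ n) holomorphic_on ball c r"
    by (rule holomorphic_on_subset[OF funpow_hol]) auto
  obtain b where b: "ball b r' \<subseteq> (exp ^^ n) ` ball c r"
  proof (rule Bloch[OF hol r])
    show "r' \<le> r * norm (deriv (exp ^^ n) c) / 12" unfolding der r'_def by simp
  qed
  define k where "k = round (Im b / pi)"
  define z' where "z' = Complex (Re b) (pi * of_int k)"
  have "\<bar>of_int k - Im b / pi\<bar> \<le> 1/2" unfolding k_def by (rule of_int_round_abs_le)
  hence "\<bar>pi * of_int k - Im b\<bar> \<le> pi/2"
  proof -
    assume a: "\<bar>of_int k - Im b / pi\<bar> \<le> 1/2"
    have "pi * of_int k - Im b = pi * (of_int k - Im b / pi)"
      using pi_gt_zero by (simp add: right_diff_distrib)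
    hence "\<bar>pi * of_int k - Im b\<bar> = pi * \<bar>of_int k - Im b / pi\<bar>"
      using pi_gt_zero by (simp add: abs_mult)
    also have "\<dots> \<le> pi * (1/2)" using a pi_gt_zero by (intro mult_left_mono) auto
    finally show ?thesis by simp
  qed
  moreover have "b - z' = Complex 0 (Im b - pi * of_int k)"
    unfolding z'_def by (simp add: complex_eq_iff)
  moreover have "norm (Complex 0 t) = \<bar>t\<bar>" for t by (simp add: cmod_def)
  ultimately have "dist b z' = \<bar>Im b - pi * of_int k\<bar>" by (simp add: dist_norm)
  hence "dist b z' < r'" using \<open>r' > pi/2\<close> \<open>\<bar>pi * of_int k - Im b\<bar> \<le> pi/2\<close>
    by (simp add: abs_minus_commute)
  then obtain u where u: "u \<in> ball c r" "z' = (exp ^^ n) u" using b by auto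
  have "Im ((exp ^^ Suc n) u) = Im (exp z')" using u(2) by simp
  also have "\<dots> = 0" unfolding z'_def Im_exp by simp
  finally show False using H[OF u(1)] by blast
qed

lemma key:
  assumes r: "r > 0"
  shows "\<exists>n. \<exists>w\<in>ball c r. Im ((exp ^^ n) w) = 0"
proof (rule ccontr)
  assume "\<not> ?thesis"
  hence H: "\<And>n w. w \<in> ball c r \<Longrightarrow> Im ((exp ^^ n) w) \<noteq> 0" by blast
  define M where "M = 6 * pi / r"
  define w where "w k = (exp ^^ k) c" for k
  define x where "x k = Re (w k)" for k
  define y where "y k = Im (w k)" for k
  define P where "P n = norm (\<Prod>k\<in>{1..n}. w k)" for n
  have PM: "P n \<le> M" for n unfolding P_def M_def w_def using bloch_bound[OF r H] by blast
  have wS: "w (Suc k) = exp (w k)" for k unfolding w_def by simp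
  have y0: "y k \<noteq> 0" for k unfolding y_def w_def using H r by simp
  have yS: "y (Suc k) = exp (x k) * sin (y k)" for k unfolding y_def x_def wS Im_exp by simp
  have xS: "x (Suc k) = exp (x k) * cos (y k)" for k unfolding y_def x_def wS Re_exp by simp
  have sin0: "sin (y k) \<noteq> 0" for k using y0[of "Suc k"] yS[of k] by auto
  have P0: "P 0 = 1" unfolding P_def by simp
  have PS: "P (Suc n) = P n * exp (x n)" for n
    unfolding P_def by (simp add: prod.cl_ivl_Suc norm_mult wS x_def)
  have Ppos: "P n > 0" for n by (induction n) (auto simp: P0 PS)
  define Q where "Q n = P n * \<bar>y 0\<bar> / \<bar>y n\<bar>" for n
  have QS: "Q (Suc n) = Q n * (\<bar>y n\<bar> / \<bar>sin (y n)\<bar>)" for n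
    unfolding Q_def PS yS using y0[of n] sin0[of n] by (simp add: abs_mult field_simps)
  have Q0: "Q 0 = 1" unfolding Q_def P0 using y0[of 0] by simp
  have fac1: "\<bar>y n\<bar> / \<bar>sin (y n)\<bar> \<ge> 1" for n
    using abs_sin_x_le_abs_x[of "y n"] sin0[of n] by simp
  have Qge: "Q n \<ge> 1" for n
  proof (induction n)
    case 0 then show ?case by (simp add: Q0)
  next
    case (Suc n) then show ?case unfolding QS using fac1[of n]
      by (metis less_eq_real_def mult_le_cancel_left1 not_one_le_zero order.trans)
  qed
  have Qmono: "Q n \<le> Q (Suc n)" for n
  proof -
    have "Q n * 1 \<le> Q n * (\<bar>y n\<bar> / \<bar>sin (y n)\<bar>)"
      using fac1[of n] Qge[of n] by (intro mult_left_mono) auto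
    thus ?thesis unfolding QS by simp
  qed
  have Qmono': "m \<le> n \<Longrightarrow> Q m \<le> Q n" for m n
    by (rule lift_Suc_mono_le[of Q]) (use Qmono in auto)
  define lam where "lam = 1 / cos (1/6::real)"
  have cpos: "cos (1/6::real) > 0" using cos_sixth by simp
  have lam1: "lam > 1" unfolding lam_def using cos_sixth cpos by simp
  have Qlam: "\<bar>y n\<bar> \<ge> 1/3 \<Longrightarrow> Q (Suc n) \<ge> lam * Q n" for n
  proof -
    assume a: "\<bar>y n\<bar> \<ge> 1/3"
    have s: "\<bar>sin (y n)\<bar> \<le> cos (1/6) * \<bar>y n\<bar>" by (rule sin_contract[OF a])
    have "lam \<le> \<bar>y n\<bar> / \<bar>sin (y n)\<bar>"
      unfolding lam_def using s sin0[of n] cpos y0[of n] by (simp add: field_simps)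
    hence "lam * Q n \<le> (\<bar>y n\<bar> / \<bar>sin (y n)\<bar>) * Q n"
      using Qge[of n] by (intro mult_right_mono) auto
    thus ?thesis unfolding QS by (simp add: mult.commute)
  qed
  have Qbd: "\<bar>y n\<bar> \<ge> 1/3 \<Longrightarrow> Q n \<le> 3 * M * \<bar>y 0\<bar>" for n
  proof -
    assume a: "\<bar>y n\<bar> \<ge> 1/3"
    have "Q n = P n * \<bar>y 0\<bar> / \<bar>y n\<bar>" by (simp add: Q_def)
    also have "\<dots> \<le> M * \<bar>y 0\<bar> / \<bar>y n\<bar>"
      using PM[of n] by (intro divide_right_mono mult_right_mono) auto
    also have "\<dots> \<le> M * \<bar>y 0\<bar> / (1/3)"
      using a PM[of 0] Ppos[of 0] by (intro divide_left_mono) auto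
    finally show ?thesis by simp
  qed
  have ev: "\<exists>N. \<forall>n\<ge>N. \<bar>y n\<bar> < 1/3"
  proof (rule ccontr)
    assume "\<not> ?thesis"
    hence fr: "\<forall>N. \<exists>n\<ge>N. \<bar>y n\<bar> \<ge> 1/3" by (auto simp: not_less)
    have "\<exists>n. \<bar>y n\<bar> \<ge> 1/3 \<and> Q n \<ge> lam ^ J" for J
    proof (induction J)
      case 0 then show ?case using fr Qge by fastforce
    next
      case (Suc J)
      then obtain n where n: "\<bar>y n\<bar> \<ge> 1/3" "Q n \<ge> lam ^ J" by blast
      obtain m where m: "m \<ge> Suc n" "\<bar>y m\<bar> \<ge> 1/3" using fr by blast
      have "lam ^ Suc J = lam * lam ^ J" by simp
      also have "\<dots> \<le> lam * Q n" using n lam1 by simp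
      also have "\<dots> \<le> Q (Suc n)" by (rule Qlam[OF n(1)])
      also have "\<dots> \<le> Q m" by (rule Qmono'[OF m(1)])
      finally show ?case using m by blast
    qed
    moreover obtain J where "3 * M * \<bar>y 0\<bar> < lam ^ J" using real_arch_pow[OF lam1] by blast
    ultimately show False using Qbd by (meson order.trans not_le)
  qed
  then obtain N where N: "\<And>n. n \<ge> N \<Longrightarrow> \<bar>y n\<bar> < 1/3" by blast
  have xinc: "n \<ge> N \<Longrightarrow> x (Suc n) \<ge> x n + 1/2" for n
  proof -
    assume "n \<ge> N"
    hence a: "\<bar>y n\<bar> < 1/3" by (rule N)
    have "\<bar>y n\<bar>^2 \<le> (1/3)^2" using a by (intro power_mono) auto
    hence "(y n)^2 \<le> 1/9" by (simp add: power_divide)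
    hence c: "cos (y n) \<ge> 9/10" using cos_lb[of "y n"] by linarith
    have e: "exp (x n) * (9/10) \<ge> x n + 1/2"
    proof (cases "x n \<le> 4")
      case True then show ?thesis using exp_ge_add_one_self[of "x n"] by linarith
    next
      case False
      have "exp (x n) \<ge> exp 4" using False by simp
      moreover have "exp (4::real) \<ge> 1 + 4 + 4^2/2"
        using exp_lower_Taylor_quadratic[of 4] by simp
      moreover have "exp (x n) = exp 4 * exp (x n - 4)" by (simp flip: exp_add)
      moreover have "exp (x n - 4) \<ge> 1 + (x n - 4)" by (rule exp_ge_add_one_self)
      ultimately have "exp (x n) \<ge> 13 * (x n - 3)"
        using mult_mono[of 13 "exp 4" "x n - 3" "exp (x n - 4)"] False by simp
      hence "exp (x n) * (9/10) \<ge> 13 * (x n - 3) * (9/10)" by (intro mult_right_mono) auto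
      moreover have "13 * (x n - 3) * (9/10) = (117/10) * x n - 351/10" by (simp add: algebra_simps)
      ultimately show ?thesis using False by linarith
    qed
    have "x (Suc n) \<ge> exp (x n) * (9/10)" unfolding xS using c by (intro mult_left_mono) auto
    thus ?thesis using e by linarith
  qed
  have xlin: "x (N + j) \<ge> x N + j/2" for j
  proof (induction j)
    case 0 then show ?case by simp
  next
    case (Suc j) then show ?case using xinc[of "N + j"] by (simp add: add_divide_distrib)
  qed
  obtain j0 :: nat where j0': "real j0 > 2 * (1 - x N)"
    using reals_Archimedean2 by blast
  hence j0: "x N + j0/2 \<ge> 1" by (simp add: field_simps)
  have Pgrow: "P (N + j0 + i) \<ge> 2 ^ i * P (N + j0)" for i
  proof (induction i)
    case 0 then show ?case by simp
  next
    case (Suc i)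
    have i0: "real i / 2 \<ge> 0" by simp
    have "x (N + (j0 + i)) \<ge> 1" using xlin[of "j0 + i"] j0 i0
      unfolding of_nat_add add_divide_distrib by linarith
    hence "exp (x (N + j0 + i)) \<ge> 2" using exp_ge_add_one_self[of "x (N + (j0 + i))"]
      unfolding add.assoc by linarith
    hence "P (Suc (N + j0 + i)) \<ge> P (N + j0 + i) * 2"
      unfolding PS using Ppos by (intro mult_left_mono) (auto simp: less_imp_le)
    then show ?case using Suc by simp
  qed
  obtain i where "M / P (N + j0) < 2 ^ i" using real_arch_pow[of 2] by auto
  hence "M < 2 ^ i * P (N + j0)" using Ppos by (simp add: field_simps)
  thus False using Pgrow[of i] PM[of "N + j0 + i"] by simp
qed

definition covers :: "complex set \<Rightarrow> complex set \<Rightarrow> nat \<Rightarrow> bool" where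
  "covers A B m \<longleftrightarrow> (\<exists>g. continuous_on B g \<and> g ` B \<subseteq> A \<and> (\<forall>y\<in>B. (exp ^^ m) (g y) = y))"

lemma covers_refl: "covers A A 0"
  unfolding covers_def by (intro exI[of _ id]) auto

lemma covers_mono: "covers A B m \<Longrightarrow> A \<subseteq> A' \<Longrightarrow> C \<subseteq> B \<Longrightarrow> covers A' C m"
proof -
  assume "covers A B m" and AA: "A \<subseteq> A'" and CB: "C \<subseteq> B"
  then obtain g where g: "continuous_on B g" "g ` B \<subseteq> A" "\<forall>y\<in>B. (exp ^^ m) (g y) = y"
    unfolding covers_def by blast
  have "continuous_on C g" using g(1) CB by (rule continuous_on_subset)
  moreover have "g ` C \<subseteq> A'" using g(2) AA CB by blast
  moreover have "\<forall>y\<in>C. (exp ^^ m) (g y) = y" using g(3) CB by blast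
  ultimately show ?thesis unfolding covers_def by blast
qed

lemma covers_trans: "covers A B m \<Longrightarrow> covers B C k \<Longrightarrow> covers A C (k + m)"
proof -
  assume "covers A B m" "covers B C k"
  then obtain g1 g2 where g1: "continuous_on B g1" "g1 ` B \<subseteq> A" "\<forall>y\<in>B. (exp ^^ m) (g1 y) = y"
    and g2: "continuous_on C g2" "g2 ` C \<subseteq> B" "\<forall>y\<in>C. (exp ^^ k) (g2 y) = y"
    unfolding covers_def by blast
  show ?thesis unfolding covers_def
  proof (intro exI[of _ "g1 \<circ> g2"] conjI ballI)
    show "continuous_on C (g1 \<circ> g2)"
      by (rule continuous_on_compose[OF g2(1) continuous_on_subset[OF g1(1) g2(2)]])
    show "(g1 \<circ> g2) ` C \<subseteq> A" using g1(2) g2(2) by (auto simp: image_subset_iff)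
    fix y assume y: "y \<in> C"
    hence "g2 y \<in> B" using g2 by auto
    thus "(exp ^^ (k + m)) ((g1 \<circ> g2) y) = y" using g1 g2 y by (simp add: funpow_add)
  qed
qed

lemma covers_step:
  assumes e: "0 < e" "e \<le> 1"
  shows "covers (cball p e) (cball (exp p) (norm (exp p) * e / 3)) 1"
  unfolding covers_def
proof (intro exI[of _ "\<lambda>y. p + Ln (y / exp p)"] conjI ballI subsetI)
  let ?B = "cball (exp p) (norm (exp p) * e / 3)"
  have close: "norm (y / exp p - 1) \<le> e / 3" if "y \<in> ?B" for y
  proof -
    have "y / exp p - 1 = (y - exp p) / exp p" by (simp add: field_simps)
    hence "norm (y / exp p - 1) = norm (y - exp p) / norm (exp p)" by (simp add: norm_divide)
    also have "\<dots> \<le> (norm (exp p) * e / 3) / norm (exp p)"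
      using that by (intro divide_right_mono) (auto simp: dist_norm norm_minus_commute)
    finally show ?thesis by simp
  qed
  have nonpos: "y / exp p \<notin> \<real>\<^sub>\<le>\<^sub>0" if "y \<in> ?B" for y
  proof
    assume "y / exp p \<in> \<real>\<^sub>\<le>\<^sub>0"
    then obtain t where t: "y / exp p = of_real t" "t \<le> 0" by (auto elim!: nonpos_Reals_cases)
    have "complex_of_real t - 1 = complex_of_real (t - 1)" by simp
    hence "norm (y / exp p - 1) = \<bar>t - 1\<bar>" unfolding t by (simp only: norm_of_real)
    hence "norm (y / exp p - 1) \<ge> 1" using t(2) by simp
    thus False using close[OF that] e by simp
  qed
  show "continuous_on ?B (\<lambda>y. p + Ln (y / exp p))"
    using nonpos by (intro continuous_intros) auto
  fix y assume y: "y \<in> ?B"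
  have y0: "y \<noteq> 0" using nonpos[OF y] by auto
  show "(exp ^^ 1) (p + Ln (y / exp p)) = y" using y0 by (simp add: exp_add)
next
  fix z assume "z \<in> (\<lambda>y. p + Ln (y / exp p)) ` cball (exp p) (norm (exp p) * e / 3)"
  then obtain y where y: "y \<in> cball (exp p) (norm (exp p) * e / 3)" and z: "z = p + Ln (y / exp p)" by auto
  have "y / exp p - 1 = (y - exp p) / exp p" by (simp add: field_simps)
  hence "norm (y / exp p - 1) = norm (y - exp p) / norm (exp p)" by (simp add: norm_divide)
  also have "\<dots> \<le> (norm (exp p) * e / 3) / norm (exp p)"
    using y by (intro divide_right_mono) (auto simp: dist_norm norm_minus_commute)
  finally have c: "norm (y / exp p - 1) \<le> e / 3" by simp
  have "norm (Ln (1 + (y / exp p - 1))) \<le> 2 * norm (y / exp p - 1)"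
    using c e by (intro norm_Ln_le) auto
  hence "norm (Ln (y / exp p)) \<le> 2 * (e/3)" using c by simp
  thus "z \<in> cball p e" unfolding z using e by (simp add: dist_norm)
qed

lemma covers_step1:
  assumes e: "0 < e" "e \<le> 1" "d \<le> norm (exp p) * e / 3"
  shows "covers (cball p e) (cball (exp p) d) 1"
proof -
  have "cball (exp p) d \<subseteq> cball (exp p) (norm (exp p) * e / 3)" using e(3) by (rule subset_cball)
  thus ?thesis by (rule covers_mono[OF covers_step[OF e(1,2)] order.refl])
qed

lemma covers_orbit:
  "0 < e \<Longrightarrow> e \<le> 1 \<Longrightarrow> \<exists>h>0. h \<le> 1 \<and> covers (cball p e) (cball ((exp ^^ N) p) h) N"
proof (induction N arbitrary: p e)
  case 0 then show ?case using covers_refl by auto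
next
  case (Suc N)
  define e1 where "e1 = min 1 (norm (exp p) * e / 3)"
  have e1: "0 < e1" "e1 \<le> 1" using Suc.prems unfolding e1_def by auto
  have c1: "covers (cball p e) (cball (exp p) e1) 1"
    using Suc.prems by (intro covers_step1) (auto simp: e1_def)
  obtain h where h: "h > 0" "h \<le> 1" "covers (cball (exp p) e1) (cball ((exp ^^ N) (exp p)) h) N"
    using Suc.IH[OF e1] by blast
  have "covers (cball p e) (cball ((exp ^^ N) (exp p)) h) (N + 1)"
    by (rule covers_trans[OF c1 h(3)])
  moreover have "(exp ^^ N) (exp p) = (exp ^^ Suc N) p" by (simp add: funpow_Suc_right del: funpow.simps)
  ultimately show ?case using h by auto
qed

lemma real_orbit:
  assumes "Im u = 0"
  shows "Im ((exp ^^ j) u) = 0 \<and> Re ((exp ^^ j) u) \<ge> Re u + j"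
proof (induction j)
  case 0 then show ?case using assms by simp
next
  case (Suc j)
  let ?z = "(exp ^^ j) u"
  have "Im ((exp ^^ Suc j) u) = 0" using Suc by (simp add: Im_exp)
  moreover have "Re ((exp ^^ Suc j) u) = exp (Re ?z)" using Suc by (simp add: Re_exp)
  moreover have "Re u + real (Suc j) \<le> exp (Re ?z)"
  proof -
    have "Re u + real j \<le> Re ?z" using Suc by simp
    thus ?thesis using exp_ge_add_one_self[of "Re ?z"] unfolding of_nat_Suc by linarith
  qed
  ultimately show ?case by simp
qed

lemma exp_real:
  assumes "Im x = 0" shows "Im (exp x) = 0" "Re (exp x) = exp (Re x)" "norm (exp x) = exp (Re x)"
  using assms by (simp_all add: Im_exp Re_exp)

lemma stage_R1:
  "Im x = 0 \<Longrightarrow> Re x \<ge> 3 \<Longrightarrow> 0 < h \<Longrightarrow> h \<le> 1 \<Longrightarrow> 1 \<le> h * (4/3)^J \<Longrightarrow>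
   \<exists>m X. Im X = 0 \<and> Re X \<ge> 3 \<and> covers (cball x h) (cball X 1) m"
proof (induction J arbitrary: x h)
  case 0
  hence "h = 1" by simp
  then show ?case using 0 covers_refl by blast
next
  case (Suc J)
  define E where "E = exp (Re x)"
  have E4: "E \<ge> 4" unfolding E_def using exp_ge_add_one_self[of "Re x"] Suc.prems by linarith
  have nE: "norm (exp x) = E" unfolding E_def using exp_real[OF Suc.prems(1)] by simp
  have ReE: "Re (exp x) = E" "Im (exp x) = 0" unfolding E_def using exp_real[OF Suc.prems(1)] by simp_all
  show ?case
  proof (cases "E * h / 3 \<ge> 1")
    case True
    have "covers (cball x h) (cball (exp x) 1) 1"
      using Suc.prems True nE by (intro covers_step1) auto
    thus ?thesis using ReE E4 by (intro exI[of _ 1] exI[of _ "exp x"]) auto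
  next
    case False
    define h' where "h' = E * h / 3"
    have h': "0 < h'" "h' \<le> 1" using False Suc.prems E4 unfolding h'_def by auto
    have "h' \<ge> (4/3) * h" unfolding h'_def using E4 Suc.prems(3) by (simp add: field_simps)
    hence A: "h' * (4/3)^J \<ge> (4/3) * h * (4/3)^J" by (intro mult_right_mono) auto
    have B: "h * (4/3)^Suc J = (4/3) * h * (4/3)^J" by simp
    have hJ: "1 \<le> h' * (4/3)^J" by (rule order.trans[OF Suc.prems(5)[unfolded B] A])
    obtain m X where X: "Im X = 0" "Re X \<ge> 3" "covers (cball (exp x) h') (cball X 1) m"
      using Suc.IH[OF ReE(2) _ h' hJ] ReE E4 by auto
    have c1: "covers (cball x h) (cball (exp x) h') 1"
      using Suc.prems nE by (intro covers_step1) (auto simp: h'_def)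
    show ?thesis using covers_trans[OF c1 X(3)] X(1,2) by blast
  qed
qed

lemma stage_R2:
  "Im X = 0 \<Longrightarrow> Re X \<ge> 3 \<Longrightarrow>
   \<exists>X' m. Im X' = 0 \<and> Re X' \<ge> Re X + real (j::nat) \<and> covers (cball X 1) (cball X' 1) m"
proof (induction j arbitrary: X)
  case 0 then show ?case using covers_refl by (intro exI[of _ X] exI[of _ 0]) auto
next
  case (Suc j)
  have ReE: "Re (exp X) = exp (Re X)" "Im (exp X) = 0" "norm (exp X) = exp (Re X)"
    using exp_real[OF Suc.prems(1)] by simp_all
  have E: "exp (Re X) \<ge> Re X + 1" using exp_ge_add_one_self[of "Re X"] by linarith
  have c1: "covers (cball X 1) (cball (exp X) 1) 1"
    using Suc.prems E ReE by (intro covers_step1) auto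
  obtain X' m where X': "Im X' = 0" "Re X' \<ge> Re (exp X) + j" "covers (cball (exp X) 1) (cball X' 1) m"
    using Suc.IH[OF ReE(2)] ReE E Suc.prems by auto
  show ?case using covers_trans[OF c1 X'(3)] X'(1,2) ReE E
    by (intro exI[of _ X'] exI[of _ "m + 1"]) auto
qed

lemma stage_final:
  assumes Y: "Im Y = 0" "Re Y \<ge> 6 * norm (Ln v) + 20" and v: "v \<noteq> 0"
    and d: "0 < d" "d \<le> norm v / 3"
  shows "covers (cball Y 1) (cball v d) 3"
proof -
  define R where "R = exp (Re Y)"
  have R: "R \<ge> 6 * norm (Ln v) + 21" unfolding R_def using exp_ge_add_one_self[of "Re Y"] Y by linarith
  have eY: "exp Y = of_real R" unfolding R_def using exp_real[OF Y(1)] by (simp add: complex_eq_iff)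
  have c1: "covers (cball Y 1) (cball (exp Y) (R/3)) 1"
    using exp_real[OF Y(1)] by (intro covers_step1) (auto simp: R_def)
  define b where "b = Complex R (pi/2)"
  have "cball b 1 \<subseteq> cball (exp Y) (R/3)"
  proof
    fix z assume z: "z \<in> cball b 1"
    have "dist (exp Y) b = pi/2" unfolding eY b_def dist_norm
      by (simp add: cmod_def complex_of_real_def)
    hence "dist (exp Y) z \<le> pi/2 + 1" using z dist_triangle[of "exp Y" z b] by (simp add: dist_commute)
    moreover have "norm (Ln v) \<ge> 0" by simp
    ultimately have "dist (exp Y) z \<le> R/3" using R pi_less_4 by linarith
    thus "z \<in> cball (exp Y) (R/3)" by simp
  qed
  hence c1': "covers (cball Y 1) (cball b 1) 1" by (rule covers_mono[OF c1 order.refl])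
  define t where "t = exp R"
  have t: "t \<ge> 6 * norm (Ln v) + 21" unfolding t_def using exp_ge_add_one_self[of R] R by linarith
  have eb: "exp b = \<i> * of_real t" unfolding b_def t_def by (simp add: complex_eq_iff Re_exp Im_exp)
  have c2: "covers (cball b 1) (cball (exp b) (t/3)) 1"
    by (intro covers_step1) (auto simp: b_def t_def)
  define k where "k = round (t / (2*pi))"
  define a where "a = Ln v + \<i> * (of_int k * (of_real pi * 2))"
  have ea: "exp a = v" unfolding a_def using v by simp
  have "\<bar>of_int k - t / (2*pi)\<bar> \<le> 1/2" unfolding k_def by (rule of_int_round_abs_le)
  moreover have "2 * pi * of_int k - t = (2*pi) * (of_int k - t / (2*pi))"
    by (simp add: right_diff_distrib)
  ultimately have kt: "\<bar>2 * pi * of_int k - t\<bar> \<le> pi"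
    using pi_gt_zero by (simp add: abs_mult)
  have "a - exp b = Complex (Re (Ln v)) (Im (Ln v) + (2 * pi * of_int k - t))"
    unfolding a_def eb by (simp add: complex_eq_iff)
  hence "norm (a - exp b) \<le> \<bar>Re (Ln v)\<bar> + \<bar>Im (Ln v) + (2 * pi * of_int k - t)\<bar>"
    using cmod_le[of "a - exp b"] by simp
  also have "\<dots> \<le> norm (Ln v) + (norm (Ln v) + pi)"
    using abs_Re_le_cmod[of "Ln v"] abs_Im_le_cmod[of "Ln v"] kt by linarith
  finally have dab: "dist a (exp b) \<le> 2 * norm (Ln v) + pi" by (simp add: dist_norm)
  have "cball a 1 \<subseteq> cball (exp b) (t/3)"
  proof
    fix z assume z: "z \<in> cball a 1"
    have "dist (exp b) z \<le> dist (exp b) a + dist a z" by (rule dist_triangle)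
    hence "dist (exp b) z \<le> 2 * norm (Ln v) + pi + 1" using z dab by (simp add: dist_commute)
    hence "dist (exp b) z \<le> t/3" using t pi_less_4 by linarith
    thus "z \<in> cball (exp b) (t/3)" by simp
  qed
  hence c2': "covers (cball b 1) (cball a 1) 1" by (rule covers_mono[OF c2 order.refl])
  have "covers (cball a 1) (cball (exp a) d) 1"
    using d ea by (intro covers_step1) auto
  hence c3: "covers (cball a 1) (cball v d) 1" unfolding ea .
  show ?thesis using covers_trans[OF c1' covers_trans[OF c2' c3]] by (simp add: eval_nat_numeral)
qed

lemma main_cover:
  assumes r: "r > 0" and v: "v \<noteq> 0" and d: "0 < d" "d \<le> norm v / 3"
  shows "\<exists>m>0. covers (ball z0 r) (cball v d) m"
proof -
  obtain n w where w: "w \<in> ball z0 r" "Im ((exp ^^ n) w) = 0" using key[OF r] by blast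
  define e where "e = min 1 ((r - dist z0 w)/2)"
  have e: "0 < e" "e \<le> 1" using w(1) unfolding e_def by auto
  have ce: "cball w e \<subseteq> ball z0 r"
  proof
    fix z assume "z \<in> cball w e"
    hence "dist w z \<le> (r - dist z0 w)/2" unfolding e_def by simp
    moreover have "dist z0 z \<le> dist z0 w + dist w z" by (rule dist_triangle)
    ultimately show "z \<in> ball z0 r" using w(1) by simp
  qed
  obtain h where h: "h > 0" "h \<le> 1" "covers (cball w e) (cball ((exp ^^ (n + 4)) w) h) (n + 4)"
    using covers_orbit[OF e] by blast
  define u where "u = (exp ^^ (Suc n)) w"
  have u: "Im u = 0" "Re u > 0" unfolding u_def using w(2) by (simp_all add: Im_exp Re_exp)
  have e34: "(exp ^^ (3 + Suc n)) w = (exp ^^ 3) ((exp ^^ Suc n) w)" by (simp only: funpow_add o_apply)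
  have "n + 4 = 3 + Suc n" by simp
  hence "(exp ^^ (n + 4)) w = (exp ^^ 3) u" unfolding u_def using e34 by (simp only:)
  hence x0: "Im ((exp ^^ (n + 4)) w) = 0" "Re ((exp ^^ (n + 4)) w) \<ge> 3"
    using real_orbit[OF u(1), of 3] u(2) by auto
  obtain J where J: "1 / h < (4/3) ^ J" using real_arch_pow[of "4/3::real" "1/h"] by auto
  hence J': "1 \<le> h * (4/3) ^ J" using h(1) by (simp add: field_simps)
  obtain m1 X where X: "Im X = 0" "Re X \<ge> 3" "covers (cball ((exp ^^ (n + 4)) w) h) (cball X 1) m1"
    using stage_R1[OF x0 h(1,2) J'] by blast
  define C0 where "C0 = 6 * norm (Ln v) + 20"
  obtain Y m2 where Y: "Im Y = 0" "Re Y \<ge> Re X + real (nat \<lceil>C0\<rceil>)" "covers (cball X 1) (cball Y 1) m2"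
    using stage_R2[OF X(1,2)] by blast
  have "real (nat \<lceil>C0\<rceil>) \<ge> C0" by linarith
  hence Y2: "Re Y \<ge> 6 * norm (Ln v) + 20" using Y(2) X(2) unfolding C0_def by linarith
  have c3: "covers (cball Y 1) (cball v d) 3" by (rule stage_final[OF Y(1) Y2 v d])
  have c0: "covers (ball z0 r) (cball ((exp ^^ (n + 4)) w) h) (n + 4)"
    by (rule covers_mono[OF h(3) ce order.refl])
  have "covers (ball z0 r) (cball v d) (3 + (m2 + (m1 + (n + 4))))"
    by (rule covers_trans[OF covers_trans[OF covers_trans[OF c0 X(3)] Y(3)] c3])
  thus ?thesis by (intro exI[of _ "3 + (m2 + (m1 + (n + 4)))"]) auto
qed

lemma good_ball:
  fixes V :: "complex set"
  assumes "open V" "V \<noteq> {}"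
  shows "\<exists>v d. v \<noteq> 0 \<and> 0 < d \<and> d \<le> norm v / 3 \<and> cball v d \<subseteq> V"
proof -
  obtain c where c: "c \<in> V" using assms(2) by blast
  obtain \<rho> where \<rho>: "\<rho> > 0" "ball c \<rho> \<subseteq> V" using assms(1) c open_contains_ball by blast
  show ?thesis
  proof (cases "c = 0")
    case False
    define d where "d = min (norm c / 3) (\<rho>/2)"
    have "cball c d \<subseteq> ball c \<rho>"
    proof
      fix z assume "z \<in> cball c d"
      hence "dist c z \<le> \<rho>/2" unfolding d_def by simp
      thus "z \<in> ball c \<rho>" using \<rho>(1) by simp
    qed
    thus ?thesis using False \<rho> unfolding d_def by (intro exI[of _ c] exI[of _ "min (norm c / 3) (\<rho>/2)"]) auto
  next
    case True
    define v where "v = complex_of_real (\<rho>/2)"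
    have nv: "norm v = \<rho>/2" unfolding v_def using \<rho>(1) by simp
    have "cball v (\<rho>/6) \<subseteq> ball c \<rho>"
    proof
      fix z assume "z \<in> cball v (\<rho>/6)"
      hence "dist v z \<le> \<rho>/6" by simp
      moreover have "dist c v = \<rho>/2" using True nv by (simp add: dist_norm)
      moreover have "dist c z \<le> dist c v + dist v z" by (rule dist_triangle)
      ultimately show "z \<in> ball c \<rho>" using \<rho>(1) by simp
    qed
    thus ?thesis using \<rho> nv by (intro exI[of _ v] exI[of _ "\<rho>/6"]) (auto simp: v_def)
  qed
qed

theorem mainTheorem1:
  shows "closure {z0 :: complex. filterlim (\<lambda>n. norm ((exp ^^ n) z0)) at_top sequentially} = UNIV
       \<and> closure {z0 :: complex. closure {(exp ^^ n) z0 | n. True} = UNIV} = UNIV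
       \<and> closure {z0 :: complex. \<exists>k>0. \<forall>n. (exp ^^ (n + k)) z0 = (exp ^^ n) z0} = UNIV"
proof (intro conjI)
  show "closure {z0 :: complex. filterlim (\<lambda>n. norm ((exp ^^ n) z0)) at_top sequentially} = UNIV"
  proof (rule set_eqI, rule iffI, simp, unfold closure_approachable, intro allI impI)
    fix x :: complex and e :: real assume e: "e > 0"
    obtain n w where w: "w \<in> ball x e" "Im ((exp ^^ n) w) = 0" using key[OF e] by blast
    have "filterlim (\<lambda>m. norm ((exp ^^ m) w)) at_top sequentially"
      unfolding filterlim_at_top
    proof
      fix Z :: real
      show "eventually (\<lambda>m. Z \<le> norm ((exp ^^ m) w)) sequentially"
      proof (rule eventually_sequentiallyI[of "n + nat \<lceil>Z - Re ((exp ^^ n) w)\<rceil>"])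
        fix m assume m: "n + nat \<lceil>Z - Re ((exp ^^ n) w)\<rceil> \<le> m"
        define j where "j = m - n"
        have mj: "m = j + n" using m unfolding j_def by simp
        have "(exp ^^ m) w = (exp ^^ j) ((exp ^^ n) w)" unfolding mj by (simp add: funpow_add)
        hence "Re ((exp ^^ m) w) \<ge> Re ((exp ^^ n) w) + j"
          using real_orbit[OF w(2)] by simp
        moreover have "real j \<ge> Z - Re ((exp ^^ n) w)" using m unfolding j_def by linarith
        moreover have "norm ((exp ^^ m) w) \<ge> Re ((exp ^^ m) w)" using complex_Re_le_cmod by blast
        ultimately show "Z \<le> norm ((exp ^^ m) w)" by linarith
      qed
    qed
    thus "\<exists>y\<in>{z0. filterlim (\<lambda>n. norm ((exp ^^ n) z0)) at_top sequentially}. dist y x < e"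
      using w(1) by (auto simp: dist_commute)
  qed
next
  show "closure {z0 :: complex. \<exists>k>0. \<forall>n. (exp ^^ (n + k)) z0 = (exp ^^ n) z0} = UNIV"
  proof (rule set_eqI, rule iffI, simp, unfold closure_approachable, intro allI impI)
    fix x :: complex and e :: real assume e: "e > 0"
    obtain v d where vd: "v \<noteq> 0" "0 < d" "d \<le> norm v / 3" "cball v d \<subseteq> ball x e"
      using good_ball[of "ball x e"] e by auto
    obtain m where m: "m > 0" "covers (ball v d) (cball v d) m" using main_cover[OF vd(2) vd(1,2,3)] by blast
    then obtain g where g: "continuous_on (cball v d) g" "g ` cball v d \<subseteq> ball v d"
      "\<forall>y\<in>cball v d. (exp ^^ m) (g y) = y" unfolding covers_def by blast
    have "g \<in> cball v d \<rightarrow> cball v d" using g(2) by auto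
    then obtain p where p: "p \<in> cball v d" "g p = p" using brouwer_ball[OF vd(2) g(1)] by blast
    have fix': "(exp ^^ m) p = p" using g(3) p by metis
    have "\<forall>n. (exp ^^ (n + m)) p = (exp ^^ n) p" using fix' by (simp add: funpow_add)
    hence "p \<in> {z0. \<exists>k>0. \<forall>n. (exp ^^ (n + k)) z0 = (exp ^^ n) z0}" using m(1) by blast
    moreover have "p \<in> ball x e" using p(1) vd(4) by blast
    hence "dist p x < e" by (simp add: dist_commute)
    ultimately show "\<exists>y\<in>{z0. \<exists>k>0. \<forall>n. (exp ^^ (n + k)) z0 = (exp ^^ n) z0}. dist y x < e" by blast
  qed
next
  show "closure {z0 :: complex. closure {(exp ^^ n) z0 | n. True} = UNIV} = UNIV"
  proof -
    obtain \<B> :: "complex set set" where B: "countable \<B>" "\<And>C. C \<in> \<B> \<Longrightarrow> open C"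
      "\<And>S. open S \<Longrightarrow> \<exists>U. U \<subseteq> \<B> \<and> S = \<Union>U"
      using univ_second_countable[where 'a=complex] by blast
    define T where "T V = {z. \<exists>n. (exp ^^ n) z \<in> V}" for V :: "complex set"
    define G where "G = T ` (\<B> - {{}})"
    have cont: "continuous_on (UNIV::complex set) (exp ^^ n)" for n :: nat
      by (rule holomorphic_on_imp_continuous_on[OF funpow_hol])
    have Topen: "open (T V)" if "open V" for V
    proof -
      have "T V = (\<Union>n. (exp ^^ n) -` V)" unfolding T_def by auto
      moreover have "open ((exp ^^ n) -` V)" for n
        using continuous_imp_open_vimage[OF cont open_UNIV that] by simp
      ultimately show ?thesis by auto
    qed
    have Tdense: "UNIV \<subseteq> closure (T V)" if Vo: "open V" "V \<noteq> {}" for V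
    proof
      fix x :: complex
      show "x \<in> closure (T V)" unfolding closure_approachable
      proof (intro allI impI)
        fix e :: real assume e: "e > 0"
        obtain v d where vd: "v \<noteq> 0" "0 < d" "d \<le> norm v / 3" "cball v d \<subseteq> V"
          using good_ball[OF Vo] by auto
        obtain m where m: "covers (ball x e) (cball v d) m" using main_cover[OF e vd(1,2,3)] by blast
        then obtain g where g: "g ` cball v d \<subseteq> ball x e" "\<forall>y\<in>cball v d. (exp ^^ m) (g y) = y"
          unfolding covers_def by blast
        have vc: "v \<in> cball v d" using vd(2) by simp
        have "(exp ^^ m) (g v) \<in> V" using g(2) vc vd(4) by auto
        hence "g v \<in> T V" unfolding T_def by blast
        moreover have "g v \<in> ball x e" using g(1) vc by blast
        hence "dist (g v) x < e" by (simp add: dist_commute)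
        ultimately show "\<exists>y\<in>T V. dist y x < e" by blast
      qed
    qed
    have A: "UNIV \<subseteq> closure (\<Inter>G)"
    proof (rule Baire)
      show "closed (UNIV :: complex set)" by simp
      show "countable G" unfolding G_def using B(1) by simp
      fix S assume "S \<in> G"
      then obtain V where V: "V \<in> \<B>" "V \<noteq> {}" "S = T V" unfolding G_def by auto
      have "open S" unfolding V(3) by (rule Topen[OF B(2)[OF V(1)]])
      hence "openin (top_of_set UNIV) S" by simp
      moreover have "UNIV \<subseteq> closure S" unfolding V(3) by (rule Tdense[OF B(2)[OF V(1)] V(2)])
      ultimately show "openin (top_of_set UNIV) S \<and> UNIV \<subseteq> closure S" by blast
    qed
    have Bf: "\<Inter>G \<subseteq> {z0 :: complex. closure {(exp ^^ n) z0 | n. True} = UNIV}"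
    proof
      fix z assume z: "z \<in> \<Inter>G"
      have "x \<in> closure {(exp ^^ n) z | n. True}" for x
        unfolding closure_approachable
      proof (intro allI impI)
        fix e :: real assume e: "e > 0"
        obtain U where U: "U \<subseteq> \<B>" "ball x e = \<Union>U" using B(3)[of "ball x e"] by auto
        have "x \<in> ball x e" using e by simp
        then obtain V where V: "V \<in> U" "x \<in> V" using U(2) by auto
        hence "T V \<in> G" unfolding G_def using U(1) by auto
        hence "z \<in> T V" using z by blast
        then obtain n where "(exp ^^ n) z \<in> V" unfolding T_def by blast
        hence "(exp ^^ n) z \<in> ball x e" using U(2) V(1) by blast
        thus "\<exists>y\<in>{(exp ^^ n) z | n. True}. dist y x < e" by (auto simp: dist_commute)
      qed
      thus "z \<in> {z0. closure {(exp ^^ n) z0 | n. True} = UNIV}" by auto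
    qed
    have "UNIV \<subseteq> closure {z0 :: complex. closure {(exp ^^ n) z0 | n. True} = UNIV}"
      by (rule order.trans[OF A closure_mono[OF Bf]])
    thus ?thesis by (rule top.extremum_uniqueI)
  qed
qed

end
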